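(* Let $n\ge4$ and $\sigma=(\sigma_1,\dots,\sigma_{n-2})\in\Sigma_n$. Then the alter ego $\underset{\sim}{\mathbf C}_n^{\sigma}=(C_n;\sigma_1,\dots,\sigma_{n-2},\mathscr T)$ yields a duality on $\mathcal G_n$, i.e. for every $\mathbf A\in\mathcal G_n$ the evaluation map $e_{\mathbf A}\colon\mathbf A\to E^\sigma D^\sigma(\mathbf A)$ is an isomorphism.
   Context: $\mathbf C_n$ is the Heyting algebra whose universe is the chain $\{0<1<\dots<n-1\}$, with lattice operations min and max, $\bot=0$, $\top=n-1$, and $a\to b=\top$ if $a\le b$, $a\to b=b$ if $b<a$. $\mathcal G_n$ is the class of algebras isomorphic to subalgebras of direct powers of $\mathbf C_n$; $\mathcal G_n(\mathbf A,\mathbf C_n)$ is the set of Heyting homomorphisms $\mathbf A\to\mathbf C_n$. For $n\ge4$: for $1\le i\le n-2$, $h_i$ is the endomorphism of $\mathbf C_n$ with $h_i(k)=k+1$ if $i\le k<n-1$ and $h_i(k)=k$ otherwise. For $1\le i\le n-3$, $g_i$ is the partial map with domain $C_n\setminus\{i\}$ given by $g_i(i+1)=i$ and $g_i(k)=k$ for $k\notin\{i,i+1\}$, and $f_i\colon C_n\setminus\{i+1\}\to C_n\setminus\{i\}$ is its inverse; these are partial endomorphisms (homomorphisms from a subalgebra of $\mathbf C_n$ into $\mathbf C_n$). $\Sigma_n=\{f_1,g_1\}\times\dots\times\{f_{n-3},g_{n-3}\}\times\{h_1,\dots,h_{n-2}\}$. Natural duality set-up: for an alter ego $(C_n;P,\mathscr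 T)$ with $P$ a set of total and partial endomorphisms and $\mathscr T$ discrete, powers carry the product topology and pointwise-lifted operations ($p^S(x)=p\circ x$, defined iff $x(s)\in\operatorname{dom}p$ for all $s$); a substructure is a subset closed under these (partial) operations wherever defined; $\mathcal X$ is the class of topological structures isomorphic to closed substructures of powers (empty one included), with morphisms the continuous maps $\varphi$ preserving total operations and such that, for partial $p$, $x\in\operatorname{dom}p^{\mathbf X}$ implies $\varphi(x)\in\operatorname{dom}p^{\mathbf Y}$ and $\varphi(p^{\mathbf X}(x))=p^{\mathbf Y}(\varphi(x))$. $D(\mathbf A)=\mathcal G_n(\mathbf A,\mathbf C_n)$ as a closed substructure of the power with exponent $A$; $E(\mathbf X)$ is the set of $\mathcal X$-morphisms from $\mathbf X$ to the alter ego, as a subalgebra of $\mathbf C_n^X$; $e_{\mathbf A}(a)(x)=x(a)$. $D^\sigma,E^\sigma$ denote these functors for the alter ego $\underset{\sim}{\mathbf C}_n^{\sigma}$. *)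

theory Defs
  imports "HOL-Analysis.Analysis"
begin

record 'a halg =
  hcar :: "'a set"
  hmeet :: "'a \<Rightarrow> 'a \<Rightarrow> 'a"
  hjoin :: "'a \<Rightarrow> 'a \<Rightarrow> 'a"
  himp :: "'a \<Rightarrow> 'a \<Rightarrow> 'a"
  hbot :: 'a
  htop :: 'a

definition is_halg :: "'a halg \<Rightarrow> bool" where
  "is_halg A \<longleftrightarrow> hbot A \<in> hcar A \<and> htop A \<in> hcar A \<and>
     (\<forall>a\<in>hcar A. \<forall>b\<in>hcar A. hmeet A a b \<in> hcar A \<and> hjoin A a b \<in> hcar A \<and> himp A a b \<in> hcar A)"

definition hhom :: "'a halg \<Rightarrow> 'b halg \<Rightarrow> ('a \<Rightarrow> 'b) \<Rightarrow> bool" where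
  "hhom A B f \<longleftrightarrow> (\<forall>a\<in>hcar A. f a \<in> hcar B) \<and> f (hbot A) = hbot B \<and> f (htop A) = htop B \<and>
     (\<forall>a\<in>hcar A. \<forall>b\<in>hcar A. f (hmeet A a b) = hmeet B (f a) (f b) \<and>
        f (hjoin A a b) = hjoin B (f a) (f b) \<and> f (himp A a b) = himp B (f a) (f b))"

definition Cn :: "nat \<Rightarrow> nat halg" where
  "Cn n = \<lparr>hcar = {..<n}, hmeet = min, hjoin = max,
           himp = (\<lambda>a b. if a \<le> b then n - 1 else b), hbot = 0, htop = n - 1\<rparr>"

definition cpow :: "nat \<Rightarrow> 'i set \<Rightarrow> ('i \<Rightarrow> nat) halg" where
  "cpow n I = \<lparr>hcar = I \<rightarrow>\<^sub>E {..<n},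
     hmeet = (\<lambda>x y. restrict (\<lambda>i. hmeet (Cn n) (x i) (y i)) I),
     hjoin = (\<lambda>x y. restrict (\<lambda>i. hjoin (Cn n) (x i) (y i)) I),
     himp = (\<lambda>x y. restrict (\<lambda>i. himp (Cn n) (x i) (y i)) I),
     hbot = restrict (\<lambda>i. hbot (Cn n)) I,
     htop = restrict (\<lambda>i. htop (Cn n)) I\<rparr>"

text \<open>D(A) = G_n(A, C_n), as a subset of the power C_n^A, with the induced product topology.\<close>
definition homs :: "nat \<Rightarrow> 'a halg \<Rightarrow> ('a \<Rightarrow> nat) set" where
  "homs n A = {x \<in> hcar A \<rightarrow>\<^sub>E {..<n}. hhom A (Cn n) x}"

definition Dtop :: "nat \<Rightarrow> 'a halg \<Rightarrow> ('a \<Rightarrow> nat) topology" where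
  "Dtop n A = subtopology (product_topology (\<lambda>_. discrete_topology {..<n}) (hcar A)) (homs n A)"

text \<open>Partial operations on C_n: pairs (domain, map). A total operation has domain {..<n}.\<close>
type_synonym pop = "nat set \<times> (nat \<Rightarrow> nat)"

definition h_op :: "nat \<Rightarrow> nat \<Rightarrow> nat \<Rightarrow> nat" where
  "h_op n i k = (if i \<le> k \<and> k < n - 1 then k + 1 else k)"

definition g_op :: "nat \<Rightarrow> nat \<Rightarrow> pop" where
  "g_op n i = ({..<n} - {i}, \<lambda>k. if k = i + 1 then i else k)"

definition f_op :: "nat \<Rightarrow> nat \<Rightarrow> pop" where
  "f_op n i = ({..<n} - {i + 1}, \<lambda>k. if k = i then i + 1 else k)"

text \<open>The operations of the alter ego for sigma in Sigma_n: for each i in 1..n-3 the choice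
  c i = True selects f_i and c i = False selects g_i; the last component is h_j.\<close>
definition sigma_ops :: "nat \<Rightarrow> (nat \<Rightarrow> bool) \<Rightarrow> nat \<Rightarrow> pop set" where
  "sigma_ops n c j = {(if c i then f_op n i else g_op n i) | i. i \<in> {1..n-3}} \<union> {({..<n}, h_op n j)}"

text \<open>Morphisms from a closed substructure X of a power C_n^S (topology T) to the alter ego
  with (partial) operations P and discrete topology.\<close>
definition is_morph :: "nat \<Rightarrow> pop set \<Rightarrow> 's set \<Rightarrow> ('s \<Rightarrow> nat) set \<Rightarrow> ('s \<Rightarrow> nat) topology
    \<Rightarrow> (('s \<Rightarrow> nat) \<Rightarrow> nat) \<Rightarrow> bool" where
  "is_morph n P S X T \<phi> \<longleftrightarrow> continuous_map T (discrete_topology {..<n}) \<phi> \<and>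
     (\<forall>(d, p)\<in>P. \<forall>x\<in>X. x ` S \<subseteq> d \<longrightarrow>
        \<phi> x \<in> d \<and> \<phi> (restrict (p \<circ> x) S) = p (\<phi> x))"

definition Edual :: "nat \<Rightarrow> pop set \<Rightarrow> 's set \<Rightarrow> ('s \<Rightarrow> nat) set \<Rightarrow> ('s \<Rightarrow> nat) topology
    \<Rightarrow> (('s \<Rightarrow> nat) \<Rightarrow> nat) set" where
  "Edual n P S X T = {\<phi> \<in> X \<rightarrow>\<^sub>E {..<n}. is_morph n P S X T \<phi>}"

definition ev :: "('a \<Rightarrow> nat) set \<Rightarrow> 'a \<Rightarrow> ('a \<Rightarrow> nat) \<Rightarrow> nat" where
  "ev X a = restrict (\<lambda>x. x a) X"

end

theory Submission
  imports Defs
begin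



definition PE :: "nat \<Rightarrow> nat set \<Rightarrow> (nat \<Rightarrow> nat) \<Rightarrow> bool" where
  "PE n D u \<longleftrightarrow> D \<subseteq> {..<n} \<and> 0 \<in> D \<and> n - 1 \<in> D \<and> u 0 = 0 \<and> u (n - 1) = n - 1 \<and>
     (\<forall>s\<in>D. u s < n) \<and> (\<forall>s\<in>D. \<forall>t\<in>D. s \<le> t \<longrightarrow> u s \<le> u t) \<and>
     (\<forall>s\<in>D. \<forall>t\<in>D. t < s \<longrightarrow> u t < u s \<or> u t = n - 1)"

definition Pres :: "nat \<Rightarrow> 'a halg \<Rightarrow> (('a \<Rightarrow> nat) \<Rightarrow> nat) \<Rightarrow> nat set \<Rightarrow> (nat \<Rightarrow> nat) \<Rightarrow> bool" where
  "Pres n A \<phi> D u \<longleftrightarrow> (\<forall>x\<in>homs n A. x ` hcar A \<subseteq> D \<longrightarrow>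
      \<phi> x \<in> D \<and> \<phi> (restrict (u \<circ> x) (hcar A)) = u (\<phi> x))"

lemma homsD:
  assumes "x \<in> homs n A"
  shows "\<And>a. a \<in> hcar A \<Longrightarrow> x a < n" "x (hbot A) = 0" "x (htop A) = n - 1"
    "\<And>a b. a \<in> hcar A \<Longrightarrow> b \<in> hcar A \<Longrightarrow> x (hmeet A a b) = min (x a) (x b)"
    "\<And>a b. a \<in> hcar A \<Longrightarrow> b \<in> hcar A \<Longrightarrow> x (hjoin A a b) = max (x a) (x b)"
    "\<And>a b. a \<in> hcar A \<Longrightarrow> b \<in> hcar A \<Longrightarrow> x (himp A a b) = (if x a \<le> x b then n - 1 else x b)"
    "x \<in> hcar A \<rightarrow>\<^sub>E {..<n}"
  using assms by (auto simp: homs_def hhom_def Cn_def)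

lemma homs_image:
  assumes "x \<in> homs n A" "is_halg A"
  shows "x ` hcar A \<subseteq> {..<n}" "0 \<in> x ` hcar A" "n - 1 \<in> x ` hcar A"
proof -
  show "x ` hcar A \<subseteq> {..<n}" using homsD(1)[OF assms(1)] by auto
  have "hbot A \<in> hcar A" "htop A \<in> hcar A" using assms(2) by (auto simp: is_halg_def)
  then show "0 \<in> x ` hcar A" "n - 1 \<in> x ` hcar A"
    using homsD(2,3)[OF assms(1)] by (metis image_eqI)+
qed

lemma PE_hom:
  assumes x: "x \<in> homs n A" and h: "is_halg A" and D: "x ` hcar A \<subseteq> D" and P: "PE n D u"
  shows "restrict (u \<circ> x) (hcar A) \<in> homs n A"
proof -
  have bt: "hbot A \<in> hcar A" "htop A \<in> hcar A"
    and cl: "\<And>a b. a \<in> hcar A \<Longrightarrow> b \<in> hcar A \<Longrightarrow> hmeet A a b \<in> hcar A \<and> hjoin A a b \<in> hcar A \<and> himp A a b \<in> hcar A"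
    using h by (auto simp: is_halg_def)
  have xD: "\<And>a. a \<in> hcar A \<Longrightarrow> x a \<in> D" using D by auto
  have lt: "\<And>a. a \<in> hcar A \<Longrightarrow> u (x a) < n" using P xD by (auto simp: PE_def)
  have mono: "\<And>a b. a \<in> hcar A \<Longrightarrow> b \<in> hcar A \<Longrightarrow> x a \<le> x b \<Longrightarrow> u (x a) \<le> u (x b)"
    using P xD by (auto simp: PE_def)
  have str: "\<And>a b. a \<in> hcar A \<Longrightarrow> b \<in> hcar A \<Longrightarrow> x b < x a \<Longrightarrow> u (x b) < u (x a) \<or> u (x b) = n - 1"
    using P xD by (auto simp: PE_def)
  have "hhom A (Cn n) (restrict (u \<circ> x) (hcar A))"
    unfolding hhom_def
  proof (intro conjI ballI)
    fix a assume "a \<in> hcar A" then show "restrict (u \<circ> x) (hcar A) a \<in> hcar (Cn n)"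
      using lt by (simp add: Cn_def)
  next
    show "restrict (u \<circ> x) (hcar A) (hbot A) = hbot (Cn n)"
      using bt homsD(2)[OF x] P by (simp add: Cn_def PE_def)
  next
    show "restrict (u \<circ> x) (hcar A) (htop A) = htop (Cn n)"
      using bt homsD(3)[OF x] P by (simp add: Cn_def PE_def)
  next
    fix a b assume a: "a \<in> hcar A" and b: "b \<in> hcar A"
    note c = cl[OF a b]
    show "restrict (u \<circ> x) (hcar A) (hmeet A a b) =
        hmeet (Cn n) (restrict (u \<circ> x) (hcar A) a) (restrict (u \<circ> x) (hcar A) b)"
      using c a b homsD(4)[OF x a b] mono[OF a b] mono[OF b a]
      by (cases "x a \<le> x b") (auto simp: Cn_def min_def intro: le_antisym)
    show "restrict (u \<circ> x) (hcar A) (hjoin A a b) =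
        hjoin (Cn n) (restrict (u \<circ> x) (hcar A) a) (restrict (u \<circ> x) (hcar A) b)"
      using c a b homsD(5)[OF x a b] mono[OF a b] mono[OF b a]
      by (cases "x a \<le> x b") (auto simp: Cn_def max_def intro: le_antisym)
    show "restrict (u \<circ> x) (hcar A) (himp A a b) =
        himp (Cn n) (restrict (u \<circ> x) (hcar A) a) (restrict (u \<circ> x) (hcar A) b)"
      using c a b homsD(6)[OF x a b] mono[OF a b] str[OF a b] lt[OF a] lt[OF b] P
      by (auto simp add: Cn_def PE_def)
  qed
  moreover have "restrict (u \<circ> x) (hcar A) \<in> hcar A \<rightarrow>\<^sub>E {..<n}" using lt by auto
  ultimately show ?thesis by (simp add: homs_def)
qed




lemma PE_comp:
  assumes "PE n D u" "PE n D' w" "u ` D \<subseteq> D'"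
  shows "PE n D (w \<circ> u)"
  using assms unfolding PE_def
  apply (simp add: image_subset_iff)
  apply (intro conjI ballI impI)
   apply (meson)
  apply (metis order.strict_iff_order)
  done

lemma PE_mono: "PE n D u \<Longrightarrow> D' \<subseteq> D \<Longrightarrow> 0 \<in> D' \<Longrightarrow> n - 1 \<in> D' \<Longrightarrow> PE n D' u"
  unfolding PE_def by blast

lemma PE_cong: "PE n D u \<Longrightarrow> (\<And>s. s \<in> D \<Longrightarrow> u s = u' s) \<Longrightarrow> PE n D u'"
  unfolding PE_def by (smt (verit))

lemma PE_id: "D \<subseteq> {..<n} \<Longrightarrow> 0 \<in> D \<Longrightarrow> n - 1 \<in> D \<Longrightarrow> PE n D id"
  unfolding PE_def by auto

lemma Pres_cong: "Pres n A \<phi> D u \<Longrightarrow> (\<And>s. s \<in> D \<Longrightarrow> u s = u' s) \<Longrightarrow> Pres n A \<phi> D u'"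
proof -
  assume P: "Pres n A \<phi> D u" and e: "\<And>s. s \<in> D \<Longrightarrow> u s = u' s"
  show ?thesis unfolding Pres_def
  proof (intro ballI impI)
    fix x assume x: "x \<in> homs n A" "x ` hcar A \<subseteq> D"
    have "restrict (u \<circ> x) (hcar A) = restrict (u' \<circ> x) (hcar A)"
      using x(2) e by (auto intro!: restrict_ext)
    then show "\<phi> x \<in> D \<and> \<phi> (restrict (u' \<circ> x) (hcar A)) = u' (\<phi> x)"
      using P x e unfolding Pres_def by metis
  qed
qed

lemma Pres_cong2: "Pres n A \<phi> D u \<Longrightarrow> D = D' \<Longrightarrow> (\<And>s. s \<in> D' \<Longrightarrow> u s = u' s) \<Longrightarrow> Pres n A \<phi> D' u'"
  using Pres_cong by metis

lemma Pres_comp: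
  assumes h: "is_halg A" and PEu: "PE n D u" and Pu: "Pres n A \<phi> D u" and Pw: "Pres n A \<phi> D' w"
  shows "Pres n A \<phi> {s \<in> D. u s \<in> D'} (w \<circ> u)"
  unfolding Pres_def
proof (intro ballI impI)
  fix x assume x: "x \<in> homs n A" and xs: "x ` hcar A \<subseteq> {s \<in> D. u s \<in> D'}"
  then have xD: "x ` hcar A \<subseteq> D" by auto
  have 1: "\<phi> x \<in> D" "\<phi> (restrict (u \<circ> x) (hcar A)) = u (\<phi> x)" using Pu x xD unfolding Pres_def by auto
  define x' where "x' = restrict (u \<circ> x) (hcar A)"
  have x': "x' \<in> homs n A" using PE_hom[OF x h xD PEu] by (simp add: x'_def)
  have x'D: "x' ` hcar A \<subseteq> D'" using xs by (auto simp: x'_def)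
  have 2: "\<phi> x' \<in> D'" "\<phi> (restrict (w \<circ> x') (hcar A)) = w (\<phi> x')" using Pw x' x'D unfolding Pres_def by auto
  have "restrict (w \<circ> x') (hcar A) = restrict ((w \<circ> u) \<circ> x) (hcar A)"
    by (auto simp: x'_def intro!: restrict_ext)
  then show "\<phi> x \<in> {s \<in> D. u s \<in> D'} \<and> \<phi> (restrict ((w \<circ> u) \<circ> x) (hcar A)) = (w \<circ> u) (\<phi> x)"
    using 1 2 by (simp add: x'_def)
qed

lemma Pres_conv:
  assumes h: "is_halg A" and Pu: "Pres n A \<phi> D u" and PEw: "PE n D' w"
    and wD: "w ` D' \<subseteq> D" and uD: "u ` D \<subseteq> D'" and uw: "\<And>t. t \<in> D' \<Longrightarrow> u (w t) = t" and wu: "\<And>s. s \<in> D \<Longrightarrow> w (u s) = s"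
  shows "Pres n A \<phi> D' w"
  unfolding Pres_def
proof (intro ballI impI)
  fix x assume x: "x \<in> homs n A" and xD: "x ` hcar A \<subseteq> D'"
  define x' where "x' = restrict (w \<circ> x) (hcar A)"
  have x': "x' \<in> homs n A" using PE_hom[OF x h xD PEw] by (simp add: x'_def)
  have x'D: "x' ` hcar A \<subseteq> D" using xD wD by (auto simp: x'_def)
  have 2: "\<phi> x' \<in> D" "\<phi> (restrict (u \<circ> x') (hcar A)) = u (\<phi> x')" using Pu x' x'D unfolding Pres_def by auto
  have "restrict (u \<circ> x') (hcar A) = x"
  proof -
    have "restrict (u \<circ> x') (hcar A) = restrict x (hcar A)"
      using xD uw by (auto simp: x'_def intro!: restrict_ext)
    also have "\<dots> = x" using homsD(7)[OF x] by (simp add: restrict_PiE_iff extensional_restrict)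
    finally show ?thesis .
  qed
  then have e: "\<phi> x = u (\<phi> x')" using 2 by simp
  show "\<phi> x \<in> D' \<and> \<phi> (restrict (w \<circ> x) (hcar A)) = w (\<phi> x)"
    using e 2 uD wu by (auto simp: x'_def)
qed




lemma PE_f: "n \<ge> 4 \<Longrightarrow> i \<in> {1..n-3} \<Longrightarrow> PE n ({..<n} - {i+1}) (\<lambda>k. if k = i then i+1 else k)"
  unfolding PE_def by auto

lemma PE_g: "n \<ge> 4 \<Longrightarrow> i \<in> {1..n-3} \<Longrightarrow> PE n ({..<n} - {i}) (\<lambda>k. if k = i+1 then i else k)"
  unfolding PE_def by auto

lemma PE_h: "n \<ge> 4 \<Longrightarrow> j \<in> {1..n-2} \<Longrightarrow> PE n {..<n} (h_op n j)"
  unfolding PE_def h_op_def by auto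

context
  fixes n j :: nat and c :: "nat \<Rightarrow> bool" and A :: "'a halg" and \<phi>
  assumes n4: "n \<ge> 4" and jr: "j \<in> {1..n-2}" and h: "is_halg A"
    and phi: "\<phi> \<in> Edual n (sigma_ops n c j) (hcar A) (homs n A) (Dtop n A)"
begin

lemma phi_morph: "is_morph n (sigma_ops n c j) (hcar A) (homs n A) (Dtop n A) \<phi>"
  using phi by (simp add: Edual_def)

lemma phi_val: "x \<in> homs n A \<Longrightarrow> \<phi> x < n"
  using phi by (auto simp: Edual_def)

lemma Pres_op: "(d, p) \<in> sigma_ops n c j \<Longrightarrow> Pres n A \<phi> d p"
  using phi_morph unfolding is_morph_def Pres_def by fast

lemma Pres_h: "Pres n A \<phi> {..<n} (h_op n j)"
  by (rule Pres_op) (simp add: sigma_ops_def)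

lemma Pres_fg: assumes i: "i \<in> {1..n-3}"
  shows "Pres n A \<phi> ({..<n} - {i+1}) (\<lambda>k. if k = i then i+1 else k) \<and>
         Pres n A \<phi> ({..<n} - {i}) (\<lambda>k. if k = i+1 then i else k)"
proof (cases "c i")
  case True
  then have 1: "Pres n A \<phi> ({..<n} - {i+1}) (\<lambda>k. if k = i then i+1 else k)"
    using i by (intro Pres_op) (auto simp: sigma_ops_def f_op_def)
  have 2: "Pres n A \<phi> ({..<n} - {i}) (\<lambda>k. if k = i+1 then i else k)"
    by (rule Pres_conv[OF h 1 PE_g[OF n4 i]]) (use i n4 in auto)
  show ?thesis using 1 2 by simp
next
  case False
  then have 2: "Pres n A \<phi> ({..<n} - {i}) (\<lambda>k. if k = i+1 then i else k)"
    using i by (intro Pres_op) (auto simp: sigma_ops_def g_op_def)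
  have 1: "Pres n A \<phi> ({..<n} - {i+1}) (\<lambda>k. if k = i then i+1 else k)"
    by (rule Pres_conv[OF h 2 PE_f[OF n4 i]]) (use i n4 in auto)
  show ?thesis using 1 2 by simp
qed

lemma Pres_full_id: "Pres n A \<phi> {..<n} id"
  unfolding Pres_def
proof (intro ballI impI conjI)
  fix x assume x: "x \<in> homs n A"
  show "\<phi> x \<in> {..<n}" using phi_val[OF x] by simp
  have "restrict (id \<circ> x) (hcar A) = x" using homsD(7)[OF x]
    by (simp add: extensional_restrict)
  then show "\<phi> (restrict (id \<circ> x) (hcar A)) = id (\<phi> x)" by simp
qed

lemma Pres_del: assumes k: "k \<in> {1..n-2}" shows "Pres n A \<phi> ({..<n} - {k}) id"
proof (cases "k = 1")
  case True
  have i: "1 \<in> {1..n-3}" using n4 by auto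
  note P = Pres_fg[OF i]
  have P3: "Pres n A \<phi> {s \<in> {..<n} - {1}. (if s = 1+1 then 1 else s) \<in> {..<n} - {1+1}}
      ((\<lambda>k. if k = 1 then 1+1 else k) \<circ> (\<lambda>k. if k = 1+1 then 1 else k))"
    by (rule Pres_comp[OF h PE_g[OF n4 i]]) (use P in auto)
  show ?thesis by (rule Pres_cong2[OF P3]) (use True n4 in auto)
next
  case False
  have i: "k - 1 \<in> {1..n-3}" using n4 k False by auto
  have kk: "k - 1 + 1 = k" using k by auto
  note P = Pres_fg[OF i, unfolded kk]
  have P3: "Pres n A \<phi> {s \<in> {..<n} - {k}. (if s = k - 1 then k else s) \<in> {..<n} - {k - 1}}
      ((\<lambda>s. if s = k then k - 1 else s) \<circ> (\<lambda>s. if s = k - 1 then k else s))"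
    by (rule Pres_comp[OF h PE_f[OF n4 i, unfolded kk]]) (use P in auto)
  show ?thesis by (rule Pres_cong2[OF P3]) (use False k n4 in auto)
qed

lemma Pres_id_K: "finite K \<Longrightarrow> K \<subseteq> {1..n-2} \<Longrightarrow> Pres n A \<phi> ({..<n} - K) id"
proof (induction K rule: finite_induct)
  case empty show ?case using Pres_full_id[unfolded id_def] by (simp add: id_def)
next
  case (insert k K)
  have P1: "Pres n A \<phi> ({..<n} - K) id" using insert.IH insert.prems by blast
  have P2: "Pres n A \<phi> ({..<n} - {k}) id" using insert Pres_del by auto
  have PE1: "PE n ({..<n} - K) id" using insert.prems n4 by (intro PE_id; force)
  have "Pres n A \<phi> {s \<in> {..<n} - K. id s \<in> {..<n} - {k}} (id \<circ> id)"
    by (rule Pres_comp[OF h PE1 P1 P2])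
  then show ?case by (rule Pres_cong2) auto
qed

lemma Pres_id: assumes "D \<subseteq> {..<n}" "0 \<in> D" "n - 1 \<in> D" shows "Pres n A \<phi> D id"
proof -
  have "D = {..<n} - ({..<n} - D)" using assms by auto
  moreover have "{..<n} - D \<subseteq> {1..n-2}"
  proof
    fix x assume x: "x \<in> {..<n} - D"
    have "x \<noteq> 0" using x assms(2) by (metis DiffD2)
    moreover have "x \<noteq> n - 1" using x assms(3) by (metis DiffD2)
    moreover have "x < n" using x by blast
    ultimately show "x \<in> {1..n-2}" by auto
  qed
  ultimately show ?thesis using Pres_id_K[of "{..<n} - D"] by simp
qed

end



definition msr :: "nat set \<Rightarrow> (nat \<Rightarrow> nat) \<Rightarrow> nat" where
  "msr D u = (\<Sum>t\<in>D. (u t - t) + (t - u t))"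

context
  fixes n j :: nat and c :: "nat \<Rightarrow> bool" and A :: "'a halg" and \<phi>
  assumes n4: "n \<ge> 4" and jr: "j \<in> {1..n-2}" and h: "is_halg A"
    and phi: "\<phi> \<in> Edual n (sigma_ops n c j) (hcar A) (homs n A) (Dtop n A)"
begin

lemma Pres_restr:
  assumes "Pres n A \<phi> D' p" "D \<subseteq> D'" "D \<subseteq> {..<n}" "0 \<in> D" "n - 1 \<in> D"
  shows "Pres n A \<phi> D p"
proof -
  have "Pres n A \<phi> {s \<in> D. id s \<in> D'} (p \<circ> id)"
    by (rule Pres_comp[OF h PE_id Pres_id[OF n4 jr h phi] assms(1)]) (use assms in auto)
  then show ?thesis by (rule Pres_cong2) (use assms in auto)
qed

lemma Pres_transfer:
  assumes "PE n D p" "Pres n A \<phi> D p" "\<And>t. t \<in> D \<Longrightarrow> q (p t) = t"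
    and "Pres n A \<phi> (p ` D) (u \<circ> q)"
  shows "Pres n A \<phi> D u"
proof -
  have "Pres n A \<phi> {t \<in> D. p t \<in> p ` D} ((u \<circ> q) \<circ> p)"
    by (rule Pres_comp[OF h assms(1,2,4)])
  then show ?thesis by (rule Pres_cong2) (use assms(3) in auto)
qed

lemma Pres_inj_aux:
  "\<forall>D u. PE n D u \<and> (\<forall>s\<in>D. u s = n - 1 \<longrightarrow> s = n - 1) \<and> msr D u = m \<longrightarrow> Pres n A \<phi> D u"
proof (induction m rule: less_induct)
  case (less m)
  show ?case
  proof (intro allI impI, elim conjE)
    fix D u assume PEu: "PE n D u" and inj: "\<forall>s\<in>D. u s = n - 1 \<longrightarrow> s = n - 1" and m: "msr D u = m"
    have Dn: "D \<subseteq> {..<n}" and D0: "0 \<in> D" and Dt: "n - 1 \<in> D" and u0: "u 0 = 0"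
      and ut: "u (n - 1) = n - 1" and ult: "\<And>s. s \<in> D \<Longrightarrow> u s < n"
      and umono: "\<And>s t. s \<in> D \<Longrightarrow> t \<in> D \<Longrightarrow> s \<le> t \<Longrightarrow> u s \<le> u t"
      and ustr: "\<And>s t. s \<in> D \<Longrightarrow> t \<in> D \<Longrightarrow> t < s \<Longrightarrow> u t < u s \<or> u t = n - 1"
      using PEu unfolding PE_def by auto
    have finD: "finite D" using Dn finite_subset by blast
    have step: "Pres n A \<phi> D u" if PEp: "PE n D p" and Pp: "Pres n A \<phi> D p"
      and PEq: "PE n (p ` D) q" and qp: "\<And>t. t \<in> D \<Longrightarrow> q (p t) = t"
      and lt: "(\<Sum>t\<in>D. (u t - p t) + (p t - u t)) < m" for p q
    proof -
      have qD: "q ` (p ` D) \<subseteq> D" using qp by auto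
      have PE': "PE n (p ` D) (u \<circ> q)" by (rule PE_comp[OF PEq PEu qD])
      have injp: "inj_on p D" using qp by (metis inj_on_inverseI)
      have inj': "\<forall>s\<in>p ` D. (u \<circ> q) s = n - 1 \<longrightarrow> s = n - 1"
      proof (intro ballI impI)
        fix s assume s: "s \<in> p ` D" and e: "(u \<circ> q) s = n - 1"
        then obtain t where t: "t \<in> D" "s = p t" by auto
        then have "u t = n - 1" using e qp by simp
        then have "t = n - 1" using inj t by auto
        then show "s = n - 1" using PEp t unfolding PE_def by auto
      qed
      have "msr (p ` D) (u \<circ> q) = (\<Sum>t\<in>D. (u t - p t) + (p t - u t))"
        unfolding msr_def by (simp add: sum.reindex[OF injp] qp)
      then have "msr (p ` D) (u \<circ> q) < m" using lt by simp
      then have "Pres n A \<phi> (p ` D) (u \<circ> q)" using less.IH PE' inj' by blast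
      then show ?thesis using Pres_transfer[OF PEp Pp qp] by blast
    qed
    show "Pres n A \<phi> D u"
    proof (cases "\<forall>t\<in>D. u t = t")
      case True
      have "Pres n A \<phi> D id" by (rule Pres_id[OF n4 jr h phi Dn D0 Dt])
      then show ?thesis by (rule Pres_cong2) (use True in auto)
    next
      case False
      show ?thesis
      proof (cases "\<exists>t\<in>D. t < u t")
        case True
        define s where "s = Max {t \<in> D. t < u t}"
        have fin: "finite {t \<in> D. t < u t}" using finD by auto
        have sD: "s \<in> D" and su: "s < u s" using Max_in[OF fin] True by (auto simp: s_def)
        have smax: "\<And>t. t \<in> D \<Longrightarrow> t < u t \<Longrightarrow> t \<le> s" using Max_ge[OF fin] by (auto simp: s_def)
        have s0: "s \<noteq> 0" using su u0 by (metis less_irrefl)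
        have st: "s \<noteq> n - 1" using su ut by auto
        have ust: "u s \<noteq> n - 1" using inj sD st by auto
        have usn: "u s < n" using ult sD by auto
        have s1: "s + 1 \<notin> D"
        proof
          assume s1D: "s + 1 \<in> D"
          have "u s < u (s + 1)" using ustr[OF s1D sD] ust by auto
          then have "s + 1 < u (s + 1)" using su by simp
          then show False using smax[OF s1D] by simp
        qed
        have i: "s \<in> {1..n-3}" using s0 su ust usn by auto
        define p where "p = (\<lambda>k. if k = s then s + 1 else k)"
        define q where "q = (\<lambda>k. if k = s + 1 then s else k)"
        have Dsub: "D \<subseteq> {..<n} - {s+1}" using Dn s1 by auto
        have PEp: "PE n D p" unfolding p_def by (rule PE_mono[OF PE_f[OF n4 i] Dsub D0 Dt])
        have Pp: "Pres n A \<phi> D p" unfolding p_def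
          by (rule Pres_restr[OF conjunct1[OF Pres_fg[OF n4 jr h phi i]] Dsub Dn D0 Dt])
        have pD: "p ` D \<subseteq> {..<n} - {s}" using Dn i by (auto simp: p_def)
        have p0: "0 \<in> p ` D" "n - 1 \<in> p ` D" using D0 Dt s0 st
          by (force simp: p_def)+
        have PEq: "PE n (p ` D) q" unfolding q_def by (rule PE_mono[OF PE_g[OF n4 i] pD p0])
        have qp: "\<And>t. t \<in> D \<Longrightarrow> q (p t) = t" using s1 by (auto simp: p_def q_def)
        have lt: "(\<Sum>t\<in>D. (u t - p t) + (p t - u t)) < m"
          unfolding m[symmetric] msr_def
          by (rule sum_strict_mono_ex1[OF finD]) (use sD su in \<open>auto simp: p_def\<close>)
        show ?thesis by (rule step[OF PEp Pp PEq qp lt])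
      next
        case False2: False
        then have le: "\<And>t. t \<in> D \<Longrightarrow> u t \<le> t" by (meson not_le)
        have ex: "\<exists>t\<in>D. u t < t" using False le by (meson order.not_eq_order_implies_strict)
        define s where "s = Min {t \<in> D. u t < t}"
        have fin: "finite {t \<in> D. u t < t}" using finD by auto
        have sD: "s \<in> D" and su: "u s < s" using Min_in[OF fin] ex by (auto simp: s_def)
        have smin: "\<And>t. t \<in> D \<Longrightarrow> u t < t \<Longrightarrow> s \<le> t" using Min_le[OF fin] by (auto simp: s_def)
        have s0: "s \<noteq> 0" using su by auto
        have st: "s \<noteq> n - 1" using su ut by auto
        have sn: "s < n" using sD Dn by auto
        have s1: "s - 1 \<notin> D"
        proof
          assume s1D: "s - 1 \<in> D"
          have "s - 1 < s" using s0 by simp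
          moreover have "s - 1 \<noteq> n - 1" using sn s0 by auto
          ultimately have "u (s - 1) < u s" using ustr[OF sD s1D] inj s1D by auto
          then have "u (s - 1) < s - 1" using su by simp
          then show False using smin[OF s1D] s0 by simp
        qed
        have s2: "s \<noteq> 1" using s1 D0 by (metis diff_self_eq_0)
        define i where "i = s - 1"
        have i: "i \<in> {1..n-3}" using s0 s2 st sn by (auto simp: i_def)
        have si: "s = i + 1" using s0 by (simp add: i_def)
        define p where "p = (\<lambda>k. if k = i + 1 then i else k)"
        define q where "q = (\<lambda>k. if k = i then i + 1 else k)"
        have Dsub: "D \<subseteq> {..<n} - {i}" using Dn s1 by (auto simp: i_def)
        have PEp: "PE n D p" unfolding p_def by (rule PE_mono[OF PE_g[OF n4 i] Dsub D0 Dt])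
        have Pp: "Pres n A \<phi> D p" unfolding p_def
          by (rule Pres_restr[OF conjunct2[OF Pres_fg[OF n4 jr h phi i]] Dsub Dn D0 Dt])
        have pD: "p ` D \<subseteq> {..<n} - {i+1}" using Dn i s1 by (auto simp: p_def i_def)
        have p0: "0 \<in> p ` D" "n - 1 \<in> p ` D" using D0 Dt s0 st si
          by (force simp: p_def)+
        have PEq: "PE n (p ` D) q" unfolding q_def by (rule PE_mono[OF PE_f[OF n4 i] pD p0])
        have qp: "\<And>t. t \<in> D \<Longrightarrow> q (p t) = t" using s1 by (auto simp: p_def q_def i_def)
        have lt: "(\<Sum>t\<in>D. (u t - p t) + (p t - u t)) < m"
          unfolding m[symmetric] msr_def
          by (rule sum_strict_mono_ex1[OF finD]) (use sD su si le in \<open>auto simp: p_def\<close>)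
        show ?thesis by (rule step[OF PEp Pp PEq qp lt])
      qed
    qed
  qed
qed

lemma Pres_inj: "PE n D u \<Longrightarrow> (\<forall>s\<in>D. u s = n - 1 \<longrightarrow> s = n - 1) \<Longrightarrow> Pres n A \<phi> D u"
  using Pres_inj_aux by blast

end



lemma PE_p:
  assumes "n \<ge> 4" "D \<subseteq> {..<n}" "0 \<in> D" "n - 1 \<in> D" "s1 \<in> D" "1 \<le> s1" "s1 \<le> n - 2"
    "\<And>t. t \<in> D \<Longrightarrow> t \<noteq> n - 1 \<Longrightarrow> t \<le> s1"
  shows "PE n D (\<lambda>k. if k = s1 then n - 2 else k)"
  unfolding PE_def
proof (intro conjI ballI impI)
  fix s t assume s: "s \<in> D" and t: "t \<in> D"
  have sn: "s < n" "t < n" using s t assms(2) by auto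
  { assume "s \<le> t"
    then show "(if s = s1 then n - 2 else s) \<le> (if t = s1 then n - 2 else t)"
      using assms(8)[OF t] sn assms(6,7) by (cases "t = n - 1"; cases "s = s1"; auto) }
  { assume "t < s"
    then show "(if t = s1 then n - 2 else t) < (if s = s1 then n - 2 else s) \<or>
       (if t = s1 then n - 2 else t) = n - 1"
      using assms(8)[OF s] assms(8)[OF t] sn assms(6,7) by (cases "s = n - 1"; cases "t = s1"; auto) }
qed (use assms in auto)

lemma PE_q:
  assumes "n \<ge> 4" "E \<subseteq> {..<n}" "0 \<in> E" "n - 1 \<in> E" "j \<notin> E" "1 \<le> j"
  shows "PE n E (\<lambda>t. if t = n - 1 then n - 1 else if j < t then t - 1 else t)"
  unfolding PE_def
proof (intro conjI ballI impI)
  fix s t assume s: "s \<in> E" and t: "t \<in> E"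
  have sn: "s < n" "t < n" "s \<noteq> j" "t \<noteq> j" using s t assms(2,5) by auto
  { assume "s \<le> t"
    then show "(if s = n - 1 then n - 1 else if j < s then s - 1 else s) \<le>
       (if t = n - 1 then n - 1 else if j < t then t - 1 else t)"
      using sn by auto }
  { assume "t < s"
    then show "(if t = n - 1 then n - 1 else if j < t then t - 1 else t) <
       (if s = n - 1 then n - 1 else if j < s then s - 1 else s) \<or>
       (if t = n - 1 then n - 1 else if j < t then t - 1 else t) = n - 1"
      using sn by auto }
qed (use assms in auto)




context
  fixes n j :: nat and c :: "nat \<Rightarrow> bool" and A :: "'a halg" and \<phi>
  assumes n4: "n \<ge> 4" and jr: "j \<in> {1..n-2}" and h: "is_halg A"
    and phi: "\<phi> \<in> Edual n (sigma_ops n c j) (hcar A) (homs n A) (Dtop n A)"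
begin

lemma Pres_all_aux: "\<forall>D u. PE n D u \<and> card D = m \<longrightarrow> Pres n A \<phi> D u"
proof (induction m rule: less_induct)
  case (less m)
  show ?case
  proof (intro allI impI, elim conjE)
    fix D u assume PEu: "PE n D u" and m: "card D = m"
    have Dn: "D \<subseteq> {..<n}" and D0: "0 \<in> D" and Dt: "n - 1 \<in> D" and u0: "u 0 = 0"
      and ut: "u (n - 1) = n - 1" and ult: "\<And>s. s \<in> D \<Longrightarrow> u s < n"
      and umono: "\<And>s t. s \<in> D \<Longrightarrow> t \<in> D \<Longrightarrow> s \<le> t \<Longrightarrow> u s \<le> u t"
      using PEu unfolding PE_def by auto
    have finD: "finite D" using Dn finite_subset by blast
    show "Pres n A \<phi> D u"
    proof (cases "\<forall>s\<in>D. u s = n - 1 \<longrightarrow> s = n - 1")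
      case True
      then show ?thesis using Pres_inj[OF n4 jr h phi PEu] by blast
    next
      case False
      then obtain s0 where s0: "s0 \<in> D" "s0 \<noteq> n - 1" "u s0 = n - 1" by blast
      define s1 where "s1 = Max (D - {n - 1})"
      have fin: "finite (D - {n - 1})" using finD by auto
      have s1D: "s1 \<in> D" "s1 \<noteq> n - 1" using Max_in[OF fin] s0 by (auto simp: s1_def)
      have s1max: "\<And>t. t \<in> D \<Longrightarrow> t \<noteq> n - 1 \<Longrightarrow> t \<le> s1"
        using Max_ge[OF fin] by (auto simp: s1_def)
      have us1: "u s1 = n - 1" using umono[OF s0(1) s1D(1) s1max[OF s0(1,2)]] ult[OF s1D(1)] s0(3)
        by linarith
      have s1ne0: "s1 \<noteq> 0"
      proof
        assume "s1 = 0" then show False using us1 u0 n4 by simp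
      qed
      have s1n: "s1 \<le> n - 2" using s1D Dn by auto
      define p where "p = (\<lambda>k. if k = s1 then n - 2 else k)"
      have PEp: "PE n D p" unfolding p_def
        by (rule PE_p[OF n4 Dn D0 Dt s1D(1) _ s1n s1max]) (use s1ne0 in auto)
      have injp: "\<forall>s\<in>D. p s = n - 1 \<longrightarrow> s = n - 1" using n4 by (auto simp: p_def)
      have Pp: "Pres n A \<phi> D p" by (rule Pres_inj[OF n4 jr h phi PEp injp])
      define D2 where "D2 = p ` D"
      have "p 0 = 0" "p (n - 1) = n - 1" using s1ne0 s1D by (auto simp: p_def)
      then have D2n: "D2 \<subseteq> {..<n}" "0 \<in> D2" "n - 1 \<in> D2"
        using Dn D0 Dt n4 unfolding D2_def
        by (auto simp: p_def)
      have PEh: "PE n D2 (h_op n j)" by (rule PE_mono[OF PE_h[OF n4 jr]]) (use D2n in auto)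
      have Ph: "Pres n A \<phi> D2 (h_op n j)"
        by (rule Pres_restr[OF n4 jr h phi Pres_h[OF n4 jr h phi]]) (use D2n in auto)
      define D3 where "D3 = h_op n j ` D2"
      define q where "q = (\<lambda>t. if t = n - 1 then n - 1 else if j < t then t - 1 else t)"
      have key: "\<And>t. t \<in> D \<Longrightarrow> q (h_op n j (p t)) = (if t = s1 then n - 1 else t)"
      proof -
        fix t assume t: "t \<in> D"
        show "q (h_op n j (p t)) = (if t = s1 then n - 1 else t)"
        proof (cases "t = s1 \<or> t = n - 1")
          case True then show ?thesis using jr n4 by (auto simp: q_def p_def h_op_def)
        next
          case False
          then have "t < s1" using s1max[OF t] by auto
          then show ?thesis using False jr n4 s1n by (auto simp: q_def p_def h_op_def)
        qed
      qed
      have D3n: "D3 \<subseteq> {..<n}" using D2n(1) n4 by (auto simp: D3_def h_op_def)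
      have "h_op n j 0 = 0" "h_op n j (n - 1) = n - 1" using jr by (auto simp: h_op_def)
      then have D30: "0 \<in> D3" "n - 1 \<in> D3" using D2n unfolding D3_def by (metis image_eqI)+
      have jD3: "j \<notin> D3"
      proof
        assume "j \<in> D3"
        then obtain t where t: "t \<in> D2" "h_op n j t = j" by (auto simp: D3_def)
        then show False using jr D2n by (auto simp: h_op_def split: if_splits)
      qed
      have PEq: "PE n D3 q" unfolding q_def by (rule PE_q[OF n4 D3n D30 jD3]) (use jr in auto)
      have D3eq: "D3 = (h_op n j \<circ> p) ` D" by (simp add: D3_def D2_def image_comp)
      have qD3: "q ` D3 \<subseteq> D" using key s1D Dt by (auto simp: D3eq)
      have PE3: "PE n D3 (u \<circ> q)" by (rule PE_comp[OF PEq PEu qD3])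
      have ninj: "\<not> inj_on (h_op n j \<circ> p) D"
      proof
        assume "inj_on (h_op n j \<circ> p) D"
        moreover have "(h_op n j \<circ> p) s1 = (h_op n j \<circ> p) (n - 1)"
          using jr n4 s1D by (auto simp: p_def h_op_def)
        ultimately show False using s1D Dt by (meson inj_on_def)
      qed
      have "card D3 < card D"
        using ninj card_image_le[OF finD, of "h_op n j \<circ> p"] inj_on_iff_eq_card[OF finD]
        unfolding D3eq by fastforce
      then have P3: "Pres n A \<phi> D3 (u \<circ> q)" using less.IH PE3 m by blast
      have "Pres n A \<phi> {t \<in> D2. h_op n j t \<in> D3} ((u \<circ> q) \<circ> h_op n j)"
        by (rule Pres_comp[OF h PEh Ph P3])
      then have P23: "Pres n A \<phi> D2 ((u \<circ> q) \<circ> h_op n j)"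
        by (rule Pres_cong2) (auto simp: D3_def)
      have "Pres n A \<phi> {t \<in> D. p t \<in> D2} (((u \<circ> q) \<circ> h_op n j) \<circ> p)"
        by (rule Pres_comp[OF h PEp Pp P23])
      then show ?thesis
        by (rule Pres_cong2) (use key us1 ut in \<open>auto simp: D2_def\<close>)
    qed
  qed
qed

lemma Pres_all: "PE n D u \<Longrightarrow> Pres n A \<phi> D u"
  using Pres_all_aux by blast

end



lemma halg_cl:
  assumes "is_halg A"
  shows "hbot A \<in> hcar A" "htop A \<in> hcar A"
    "\<And>a b. a \<in> hcar A \<Longrightarrow> b \<in> hcar A \<Longrightarrow> hmeet A a b \<in> hcar A"
    "\<And>a b. a \<in> hcar A \<Longrightarrow> b \<in> hcar A \<Longrightarrow> hjoin A a b \<in> hcar A"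
    "\<And>a b. a \<in> hcar A \<Longrightarrow> b \<in> hcar A \<Longrightarrow> himp A a b \<in> hcar A"
  using assms by (auto simp: is_halg_def)

lemma cutF1:
  assumes x: "x \<in> homs n A" and y: "y \<in> homs n A" and h: "is_halg A"
    and b0: "b0 \<in> hcar A" "x b0 = s0" "y b0 = n - 1"
    and tle: "\<And>a. a \<in> hcar A \<Longrightarrow> x a = n - 1 \<Longrightarrow> t0 \<le> y a"
    and a: "a \<in> hcar A" "s0 \<le> x a"
  shows "t0 \<le> y a"
proof -
  have cc: "himp A b0 a \<in> hcar A" using halg_cl(5)[OF h b0(1) a(1)] .
  have "x (himp A b0 a) = n - 1" using homsD(6)[OF x b0(1) a(1)] b0 a by simp
  then have 1: "t0 \<le> y (himp A b0 a)" using tle[OF cc] by simp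
  have "y (himp A b0 a) = (if n - 1 \<le> y a then n - 1 else y a)"
    using homsD(6)[OF y b0(1) a(1)] b0 by simp
  then show ?thesis using 1 by (auto split: if_splits)
qed

lemma cutF2:
  assumes x: "x \<in> homs n A" and y: "y \<in> homs n A" and h: "is_halg A"
    and sle: "\<And>a. a \<in> hcar A \<Longrightarrow> y a = n - 1 \<Longrightarrow> s0 \<le> x a"
    and F1: "\<And>a. a \<in> hcar A \<Longrightarrow> s0 \<le> x a \<Longrightarrow> t0 \<le> y a"
    and a: "a \<in> hcar A" "b \<in> hcar A" "y a < t0" "y a \<le> y b"
  shows "x a \<le> x b"
proof (rule ccontr)
  assume ne: "\<not> x a \<le> x b"
  have cc: "himp A a b \<in> hcar A" using halg_cl(5)[OF h a(1,2)] .
  have "y (himp A a b) = n - 1" using homsD(6)[OF y a(1,2)] a by simp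
  then have "s0 \<le> x (himp A a b)" using sle[OF cc] by simp
  moreover have "x (himp A a b) = x b" using homsD(6)[OF x a(1,2)] ne by simp
  ultimately have "s0 \<le> x a" using ne by simp
  then have "t0 \<le> y a" using F1 a by simp
  then show False using a by simp
qed

lemma prod_case:
  assumes x: "x \<in> homs n A" and y: "y \<in> homs n A" and h: "is_halg A" and n4: "n \<ge> 4"
    and b: "b \<in> hcar A" and cb: "cb \<in> hcar A"
    and a0: "a0 \<in> hcar A" "x a0 = 0" "y a0 = n - 1"
  shows "\<exists>a\<in>hcar A. x a = x b \<and> y a = y cb"
proof -
  note cl = halg_cl[OF h]
  define ng where "ng = himp A a0 (hbot A)"
  have ng: "ng \<in> hcar A" using cl(5)[OF a0(1) cl(1)] by (simp add: ng_def)
  have xng: "x ng = n - 1" using homsD(6)[OF x a0(1) cl(1)] homsD(2)[OF x] a0 by (simp add: ng_def)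
  have yng: "y ng = 0" using homsD(6)[OF y a0(1) cl(1)] homsD(2)[OF y] a0 n4 by (simp add: ng_def)
  define m1 where "m1 = hmeet A b ng"
  define m2 where "m2 = hmeet A cb a0"
  have m: "m1 \<in> hcar A" "m2 \<in> hcar A" using cl(3)[OF b ng] cl(3)[OF cb a0(1)] by (simp_all add: m1_def m2_def)
  have xm1: "x m1 = x b" using homsD(4)[OF x b ng] xng homsD(1)[OF x b] by (simp add: m1_def)
  have ym1: "y m1 = 0" using homsD(4)[OF y b ng] yng by (simp add: m1_def)
  have xm2: "x m2 = 0" using homsD(4)[OF x cb a0(1)] a0 by (simp add: m2_def)
  have ym2: "y m2 = y cb" using homsD(4)[OF y cb a0(1)] a0 homsD(1)[OF y cb] by (simp add: m2_def)
  have "hjoin A m1 m2 \<in> hcar A" using cl(4)[OF m] .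
  moreover have "x (hjoin A m1 m2) = x b" using homsD(5)[OF x m] xm1 xm2 by simp
  moreover have "y (hjoin A m1 m2) = y cb" using homsD(5)[OF y m] ym1 ym2 by simp
  ultimately show ?thesis by blast
qed

context
  fixes n j :: nat and c :: "nat \<Rightarrow> bool" and A :: "'a halg" and \<phi>
  assumes n4: "n \<ge> 4" and jr: "j \<in> {1..n-2}" and h: "is_halg A"
    and phi: "\<phi> \<in> Edual n (sigma_ops n c j) (hcar A) (homs n A) (Dtop n A)"
begin

lemma phi_in: assumes x: "x \<in> homs n A" shows "\<phi> x \<in> x ` hcar A"
proof -
  have "PE n (x ` hcar A) id" using homs_image[OF x h] by (intro PE_id) auto
  then have "Pres n A \<phi> (x ` hcar A) id" by (rule Pres_all[OF n4 jr h phi])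
  then show ?thesis using x unfolding Pres_def by blast
qed

lemma Pres_use:
  assumes x: "x \<in> homs n A" and PEu: "PE n (x ` hcar A) u"
  shows "\<phi> (restrict (u \<circ> x) (hcar A)) = u (\<phi> x)"
  using Pres_all[OF n4 jr h phi PEu] x unfolding Pres_def by blast

lemma binary:
  assumes x: "x \<in> homs n A" and y: "y \<in> homs n A"
  shows "\<exists>a\<in>hcar A. x a = \<phi> x \<and> y a = \<phi> y"
proof -
  let ?A = "hcar A"
  note cl = halg_cl[OF h]
  obtain b where b: "b \<in> ?A" "x b = \<phi> x" using phi_in[OF x] by auto
  obtain cb where cb: "cb \<in> ?A" "y cb = \<phi> y" using phi_in[OF y] by auto
  have xlt: "\<And>a. a \<in> ?A \<Longrightarrow> x a < n" using homsD(1)[OF x] by blast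
  have ylt: "\<And>a. a \<in> ?A \<Longrightarrow> y a < n" using homsD(1)[OF y] by blast
  have xb: "x (hbot A) = 0" "x (htop A) = n - 1" using homsD(2,3)[OF x] by auto
  have yb: "y (hbot A) = 0" "y (htop A) = n - 1" using homsD(2,3)[OF y] by auto
  note xm = homsD(4,5,6)[OF x] and ym = homsD(4,5,6)[OF y]
  show ?thesis
  proof (cases "\<exists>a0\<in>?A. x a0 = 0 \<and> y a0 = n - 1")
    case True
    then obtain a0 where a0: "a0 \<in> ?A" "x a0 = 0" "y a0 = n - 1" by blast
    show ?thesis using prod_case[OF x y h n4 b(1) cb(1) a0] b cb by metis
  next
    case NP: False
    show ?thesis
    proof (cases "\<exists>a0\<in>?A. x a0 = n - 1 \<and> y a0 = 0")
      case True
      then obtain a0 where a0: "a0 \<in> ?A" "y a0 = 0" "x a0 = n - 1" by blast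
      show ?thesis using prod_case[OF y x h n4 cb(1) b(1) a0] b cb by metis
    next
      case NQ: False
      define s0 where "s0 = (LEAST s. \<exists>a\<in>?A. x a = s \<and> y a = n - 1)"
      define t0 where "t0 = (LEAST t. \<exists>a\<in>?A. y a = t \<and> x a = n - 1)"
      have ex1: "\<exists>a\<in>?A. x a = n - 1 \<and> y a = n - 1" using cl xb yb by blast
      obtain b0 where b0: "b0 \<in> ?A" "x b0 = s0" "y b0 = n - 1"
        using LeastI_ex[of "\<lambda>s. \<exists>a\<in>?A. x a = s \<and> y a = n - 1"] ex1 unfolding s0_def by blast
      obtain c0 where c0: "c0 \<in> ?A" "y c0 = t0" "x c0 = n - 1"
        using LeastI_ex[of "\<lambda>t. \<exists>a\<in>?A. y a = t \<and> x a = n - 1"] ex1 unfolding t0_def by blast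
      have sle: "\<And>a. a \<in> ?A \<Longrightarrow> y a = n - 1 \<Longrightarrow> s0 \<le> x a"
        unfolding s0_def by (rule Least_le) blast
      have tle: "\<And>a. a \<in> ?A \<Longrightarrow> x a = n - 1 \<Longrightarrow> t0 \<le> y a"
        unfolding t0_def by (rule Least_le) blast
      have s0pos: "0 < s0" using NP b0 by (metis gr0I)
      have t0pos: "0 < t0" using NQ c0 by (metis gr0I)
      have s0n: "s0 \<le> n - 1" using sle[OF cl(2)] xb yb by simp
      have t0n: "t0 \<le> n - 1" using tle[OF cl(2)] xb yb by simp
      have F1: "\<And>a. a \<in> ?A \<Longrightarrow> s0 \<le> x a \<Longrightarrow> t0 \<le> y a"
        by (rule cutF1[OF x y h b0 tle])
      have F1': "\<And>a. a \<in> ?A \<Longrightarrow> t0 \<le> y a \<Longrightarrow> s0 \<le> x a"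
        by (rule cutF1[OF y x h c0 sle])
      have F2': "\<And>a b. a \<in> ?A \<Longrightarrow> b \<in> ?A \<Longrightarrow> y a < t0 \<Longrightarrow> y a \<le> y b \<Longrightarrow> x a \<le> x b"
        by (rule cutF2[OF x y h sle F1])
      have F2: "\<And>a b. a \<in> ?A \<Longrightarrow> b \<in> ?A \<Longrightarrow> x a < s0 \<Longrightarrow> x a \<le> x b \<Longrightarrow> y a \<le> y b"
        by (rule cutF2[OF y x h tle F1'])
      define pk where "pk = (\<lambda>t. SOME a. a \<in> ?A \<and> y a = t)"
      have pk: "\<And>t. t \<in> y ` ?A \<Longrightarrow> pk t \<in> ?A \<and> y (pk t) = t"
        unfolding pk_def by (rule someI_ex) blast
      define u where "u = (\<lambda>s. if s0 \<le> s then n - 1 else s)"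
      define v where "v = (\<lambda>t. if t0 \<le> t then n - 1 else x (pk t))"
      have vlow: "\<And>t. t \<in> y ` ?A \<Longrightarrow> t < t0 \<Longrightarrow> v t < s0"
      proof -
        fix t assume t: "t \<in> y ` ?A" "t < t0"
        have "\<not> s0 \<le> x (pk t)" using F1[of "pk t"] pk[OF t(1)] t(2) by auto
        then show "v t < s0" using t(2) by (simp add: v_def)
      qed
      have uv: "\<And>a. a \<in> ?A \<Longrightarrow> u (x a) = v (y a)"
      proof -
        fix a assume a: "a \<in> ?A"
        show "u (x a) = v (y a)"
        proof (cases "s0 \<le> x a")
          case True then show ?thesis using F1[OF a] by (simp add: u_def v_def)
        next
          case False
          then have ya: "y a < t0" using F1'[OF a] by linarith
          have p: "pk (y a) \<in> ?A" "y (pk (y a)) = y a" using pk[of "y a"] a by auto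
          have "x (pk (y a)) = x a" using F2'[OF p(1) a] F2'[OF a p(1)] p ya by (simp add: le_antisym)
          then show ?thesis using False ya by (simp add: u_def v_def)
        qed
      qed
      have PEu: "PE n (x ` ?A) u"
        unfolding PE_def using homs_image[OF x h] s0pos s0n n4
        by (auto simp: u_def)
      have PEv: "PE n (y ` ?A) v"
        unfolding PE_def
      proof (intro conjI ballI impI)
        show "y ` ?A \<subseteq> {..<n}" "0 \<in> y ` ?A" "n - 1 \<in> y ` ?A" using homs_image[OF y h] by auto
        have p0: "pk 0 \<in> ?A" "y (pk 0) = 0" using pk[of 0] homs_image[OF y h] by auto
        have "x (pk 0) \<le> x (hbot A)" using F2'[OF p0(1) cl(1)] p0 t0pos yb by simp
        then show "v 0 = 0" using t0pos xb by (simp add: v_def)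
        show "v (n - 1) = n - 1" using t0n by (simp add: v_def)
      next
        fix s assume s: "s \<in> y ` ?A"
        show "v s < n" using pk[OF s] xlt n4 by (auto simp: v_def)
      next
        fix s t assume s: "s \<in> y ` ?A" and t: "t \<in> y ` ?A" and st: "s \<le> t"
        show "v s \<le> v t"
        proof (cases "t0 \<le> t")
          case True
          have "x (pk s) < n" using pk[OF s] xlt by blast
          then show ?thesis using True by (auto simp: v_def)
        next
          case False
          then show ?thesis using F2'[of "pk s" "pk t"] pk[OF s] pk[OF t] st by (simp add: v_def)
        qed
      next
        fix s t assume s: "s \<in> y ` ?A" and t: "t \<in> y ` ?A" and ts: "t < s"
        show "v t < v s \<or> v t = n - 1"
        proof (cases "t0 \<le> t")
          case True then show ?thesis by (simp add: v_def)
        next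
          case tl: False
          show ?thesis
          proof (cases "t0 \<le> s")
            case True then show ?thesis using vlow[OF t] tl s0n by (simp add: v_def)
          next
            case False
            have le: "x (pk t) \<le> x (pk s)" using F2'[of "pk t" "pk s"] pk[OF s] pk[OF t] ts tl by simp
            have "x (pk t) \<noteq> x (pk s)"
            proof
              assume e: "x (pk t) = x (pk s)"
              have "x (pk s) < s0" using vlow[OF s] False by (simp add: v_def)
              then have "y (pk s) \<le> y (pk t)" using F2[of "pk s" "pk t"] pk[OF s] pk[OF t] e by simp
              then show False using pk[OF s] pk[OF t] ts by simp
            qed
            then show ?thesis using le tl False by (simp add: v_def)
          qed
        qed
      qed
      have e1: "\<phi> (restrict (u \<circ> x) ?A) = u (\<phi> x)" by (rule Pres_use[OF x PEu])
      have e2: "\<phi> (restrict (v \<circ> y) ?A) = v (\<phi> y)" by (rule Pres_use[OF y PEv])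
      have "restrict (u \<circ> x) ?A = restrict (v \<circ> y) ?A" using uv by (auto intro!: restrict_ext)
      then have uveq: "u (\<phi> x) = v (\<phi> y)" using e1 e2 by simp
      have phy: "\<phi> y \<in> y ` ?A" using cb by (metis image_eqI)
      show ?thesis
      proof (cases "s0 \<le> \<phi> x")
        case True
        then have "v (\<phi> y) = n - 1" using uveq by (simp add: u_def)
        then have ty: "t0 \<le> \<phi> y" using vlow[OF phy] s0n by (cases "t0 \<le> \<phi> y") auto
        let ?r = "hjoin A b b0" and ?q = "hjoin A cb c0"
        have rq: "?r \<in> ?A" "?q \<in> ?A" using cl b b0 cb c0 by blast+
        have xr: "x ?r = \<phi> x" "y ?r = n - 1" using xm ym b b0 True ylt[OF b(1)] by (auto simp: max_def)
        have xq: "x ?q = n - 1" "y ?q = \<phi> y" using xm ym cb c0 ty xlt[OF cb(1)] by (auto simp: max_def)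
        have "hmeet A ?r ?q \<in> ?A" using cl rq by blast
        moreover have "x (hmeet A ?r ?q) = \<phi> x" using xm rq xr xq xlt[OF b(1)] b by (auto simp: min_def)
        moreover have "y (hmeet A ?r ?q) = \<phi> y" using ym rq xr xq ylt[OF cb(1)] cb by (auto simp: min_def)
        ultimately show ?thesis by blast
      next
        case False
        then have ux: "u (\<phi> x) = \<phi> x" by (simp add: u_def)
        have ty: "\<phi> y < t0"
        proof (rule ccontr)
          assume "\<not> \<phi> y < t0"
          then have "v (\<phi> y) = n - 1" by (simp add: v_def)
          then show False using uveq ux False s0n by simp
        qed
        then have "x (pk (\<phi> y)) = \<phi> x" using uveq ux by (simp add: v_def)
        then show ?thesis using pk[OF phy] by blast
      qed
    qed
  qed
qed

end



lemma openin_agree: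
  assumes "finite F" "F \<subseteq> I" "z0 \<in> topspace (product_topology (\<lambda>_. discrete_topology U) I)"
  shows "openin (product_topology (\<lambda>_. discrete_topology U) I)
           {z \<in> topspace (product_topology (\<lambda>_. discrete_topology U) I). \<forall>i\<in>F. z i = z0 i}"
  using assms(1,2)
proof (induction F rule: finite_induct)
  case empty
  show ?case using openin_topspace[of "product_topology (\<lambda>_. discrete_topology U) I"] by simp
next
  case (insert i F)
  let ?P = "product_topology (\<lambda>_. discrete_topology U) I"
  have i: "i \<in> I" using insert by auto
  have z0i: "z0 i \<in> U" using assms(3) i by auto
  have "openin ?P {z \<in> topspace ?P. z i \<in> {z0 i}}"
    by (rule openin_continuous_map_preimage[OF continuous_map_product_projection[OF i]])
       (use z0i in simp)
  moreover have "openin ?P {z \<in> topspace ?P. \<forall>i\<in>F. z i = z0 i}" using insert by auto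
  ultimately have "openin ?P ({z \<in> topspace ?P. z i \<in> {z0 i}} \<inter> {z \<in> topspace ?P. \<forall>i\<in>F. z i = z0 i})"
    by (rule openin_Int)
  moreover have "{z \<in> topspace ?P. z i \<in> {z0 i}} \<inter> {z \<in> topspace ?P. \<forall>i\<in>F. z i = z0 i}
       = {z \<in> topspace ?P. \<forall>i\<in>insert i F. z i = z0 i}" by auto
  ultimately show ?case by simp
qed

lemma openin_findep:
  assumes "finite F" "F \<subseteq> I" and dep: "\<And>z z'. (\<forall>i\<in>F. z i = z' i) \<Longrightarrow> Q z = Q z'"
  shows "openin (product_topology (\<lambda>_. discrete_topology U) I)
           {z \<in> topspace (product_topology (\<lambda>_. discrete_topology U) I). Q z}"
  (is "openin ?P ?S")
proof (subst openin_subopen, intro ballI)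
  fix z0 assume z0: "z0 \<in> ?S"
  let ?N = "{z \<in> topspace ?P. \<forall>i\<in>F. z i = z0 i}"
  have "openin ?P ?N" by (rule openin_agree[OF assms(1,2)]) (use z0 in auto)
  moreover have "?N \<subseteq> ?S" using z0 dep by auto
  moreover have "z0 \<in> ?N" using z0 by auto
  ultimately show "\<exists>T. openin ?P T \<and> z0 \<in> T \<and> T \<subseteq> ?S" by blast
qed

definition Qab :: "nat \<Rightarrow> 'a halg \<Rightarrow> 'a \<Rightarrow> 'a \<Rightarrow> ('a \<Rightarrow> nat) \<Rightarrow> bool" where
  "Qab n A a b z \<longleftrightarrow> z (hbot A) = 0 \<and> z (htop A) = n - 1 \<and> z (hmeet A a b) = min (z a) (z b) \<and>
     z (hjoin A a b) = max (z a) (z b) \<and> z (himp A a b) = (if z a \<le> z b then n - 1 else z b)"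

lemma homs_Qab:
  assumes h: "is_halg A"
  shows "homs n A = {z \<in> hcar A \<rightarrow>\<^sub>E {..<n}. \<forall>a\<in>hcar A. \<forall>b\<in>hcar A. Qab n A a b z}"
proof (rule set_eqI, rule iffI)
  fix z assume "z \<in> homs n A"
  then show "z \<in> {z \<in> hcar A \<rightarrow>\<^sub>E {..<n}. \<forall>a\<in>hcar A. \<forall>b\<in>hcar A. Qab n A a b z}"
    using homsD[of z n A] by (auto simp: Qab_def)
next
  fix z assume z: "z \<in> {z \<in> hcar A \<rightarrow>\<^sub>E {..<n}. \<forall>a\<in>hcar A. \<forall>b\<in>hcar A. Qab n A a b z}"
  have bt: "hbot A \<in> hcar A" using halg_cl(1)[OF h] .
  have "Qab n A (hbot A) (hbot A) z" using z bt by blast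
  then have "z (hbot A) = 0" "z (htop A) = n - 1" by (auto simp: Qab_def)
  then show "z \<in> homs n A" using z unfolding homs_def hhom_def Qab_def Cn_def by (auto simp: PiE_iff)
qed

lemma homs_closed:
  assumes h: "is_halg A"
  shows "closedin (product_topology (\<lambda>_. discrete_topology {..<n}) (hcar A)) (homs n A)"
proof -
  let ?P = "product_topology (\<lambda>_. discrete_topology {..<n}) (hcar A)"
  have tp: "topspace ?P = hcar A \<rightarrow>\<^sub>E {..<n}" by simp
  have eq: "topspace ?P - homs n A =
      (\<Union>ab\<in>hcar A \<times> hcar A. {z \<in> topspace ?P. \<not> Qab n A (fst ab) (snd ab) z})"
    unfolding homs_Qab[OF h] tp by auto
  have op: "openin ?P {z \<in> topspace ?P. \<not> Qab n A (fst ab) (snd ab) z}" if ab: "ab \<in> hcar A \<times> hcar A" for ab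
  proof (rule openin_findep[of "{fst ab, snd ab, hbot A, htop A, hmeet A (fst ab) (snd ab),
       hjoin A (fst ab) (snd ab), himp A (fst ab) (snd ab)}"])
    show "{fst ab, snd ab, hbot A, htop A, hmeet A (fst ab) (snd ab),
       hjoin A (fst ab) (snd ab), himp A (fst ab) (snd ab)} \<subseteq> hcar A"
      using ab halg_cl[OF h] by (auto simp: mem_Times_iff)
  qed (auto simp: Qab_def)
  have "openin ?P (topspace ?P - homs n A)" unfolding eq
    by (rule openin_Union) (use op in blast)
  moreover have "homs n A \<subseteq> topspace ?P" by (auto simp: homs_def)
  ultimately show ?thesis by (simp add: closedin_def)
qed

lemma Dtop_topspace: "topspace (Dtop n A) = homs n A"
proof -
  have "homs n A \<subseteq> hcar A \<rightarrow>\<^sub>E {..<n}" unfolding homs_def by blast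
  then show ?thesis unfolding Dtop_def topspace_subtopology topspace_product_topology
    by (simp add: Int_absorb1)
qed

lemma Dtop_compact: assumes h: "is_halg A" shows "compact_space (Dtop n A)"
proof -
  let ?P = "product_topology (\<lambda>_. discrete_topology {..<n}) (hcar A)"
  have "compact_space ?P" by (simp add: compact_space_product_topology compact_space_discrete_topology)
  then have "compactin ?P (homs n A)" using homs_closed[OF h] by (rule closedin_compact_space)
  then have "compactin (Dtop n A) (homs n A)" by (simp add: Dtop_def compactin_subtopology)
  then show ?thesis by (simp add: compact_space_def Dtop_topspace)
qed

lemma proj_cont: "a \<in> hcar A \<Longrightarrow> continuous_map (Dtop n A) (discrete_topology {..<n}) (\<lambda>x. x a)"
  unfolding Dtop_def
  by (rule continuous_map_from_subtopology[OF continuous_map_product_projection])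

lemma openin_lc2:
  assumes f: "continuous_map T (discrete_topology U) f" and g: "continuous_map T (discrete_topology V) g"
  shows "openin T {z \<in> topspace T. P (f z) (g z)}"
proof (subst openin_subopen, intro ballI)
  fix z0 assume z0: "z0 \<in> {z \<in> topspace T. P (f z) (g z)}"
  have "f z0 \<in> U" "g z0 \<in> V" using z0 continuous_map_image_subset_topspace[OF f]
      continuous_map_image_subset_topspace[OF g] by auto
  then have o1: "openin T {z \<in> topspace T. f z \<in> {f z0}}" "openin T {z \<in> topspace T. g z \<in> {g z0}}"
    using openin_continuous_map_preimage[OF f, of "{f z0}"] openin_continuous_map_preimage[OF g, of "{g z0}"]
    by simp_all
  then have "openin T ({z \<in> topspace T. f z \<in> {f z0}} \<inter> {z \<in> topspace T. g z \<in> {g z0}})"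
    by (rule openin_Int)
  moreover have "({z \<in> topspace T. f z \<in> {f z0}} \<inter> {z \<in> topspace T. g z \<in> {g z0}}) \<subseteq> {z \<in> topspace T. P (f z) (g z)}"
    using z0 by auto
  moreover have "z0 \<in> ({z \<in> topspace T. f z \<in> {f z0}} \<inter> {z \<in> topspace T. g z \<in> {g z0}})" using z0 by auto
  ultimately show "\<exists>S. openin T S \<and> z0 \<in> S \<and> S \<subseteq> {z \<in> topspace T. P (f z) (g z)}" by blast
qed

lemma fin_meet:
  assumes h: "is_halg A" "finite G" "G \<noteq> {}" "\<And>y. y \<in> G \<Longrightarrow> f y \<in> hcar A"
  shows "\<exists>b\<in>hcar A. \<forall>z\<in>homs n A. z b = Min ((\<lambda>y. z (f y)) ` G)"
  using assms(2,3,4)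
proof (induction G rule: finite_ne_induct)
  case (singleton y) then show ?case by auto
next
  case (insert y G)
  then obtain b where b: "b \<in> hcar A" "\<forall>z\<in>homs n A. z b = Min ((\<lambda>y. z (f y)) ` G)" by auto
  have fy: "f y \<in> hcar A" using insert by auto
  show ?case
  proof (intro bexI ballI)
    show "hmeet A (f y) b \<in> hcar A" using halg_cl(3)[OF h(1) fy b(1)] .
    fix z assume z: "z \<in> homs n A"
    show "z (hmeet A (f y) b) = Min ((\<lambda>y. z (f y)) ` insert y G)"
      using homsD(4)[OF z fy b(1)] b(2) z insert by (simp add: Min_insert)
  qed
qed

lemma fin_join:
  assumes h: "is_halg A" "finite G" "G \<noteq> {}" "\<And>y. y \<in> G \<Longrightarrow> f y \<in> hcar A"
  shows "\<exists>b\<in>hcar A. \<forall>z\<in>homs n A. z b = Max ((\<lambda>y. z (f y)) ` G)"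
  using assms(2,3,4)
proof (induction G rule: finite_ne_induct)
  case (singleton y) then show ?case by auto
next
  case (insert y G)
  then obtain b where b: "b \<in> hcar A" "\<forall>z\<in>homs n A. z b = Max ((\<lambda>y. z (f y)) ` G)" by auto
  have fy: "f y \<in> hcar A" using insert by auto
  show ?case
  proof (intro bexI ballI)
    show "hjoin A (f y) b \<in> hcar A" using halg_cl(4)[OF h(1) fy b(1)] .
    fix z assume z: "z \<in> homs n A"
    show "z (hjoin A (f y) b) = Max ((\<lambda>y. z (f y)) ` insert y G)"
      using homsD(5)[OF z fy b(1)] b(2) z insert by (simp add: Max_insert)
  qed
qed

lemma finite_cover:
  assumes h: "is_halg A" and op: "\<And>y. y \<in> homs n A \<Longrightarrow> openin (Dtop n A) (W y)"
    and cov: "\<And>y. y \<in> homs n A \<Longrightarrow> y \<in> W y"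
  shows "\<exists>G. finite G \<and> G \<subseteq> homs n A \<and> homs n A \<subseteq> (\<Union>y\<in>G. W y)"
proof -
  have "compactin (Dtop n A) (homs n A)"
    using Dtop_compact[OF h] by (simp add: compact_space_def Dtop_topspace)
  moreover have "\<forall>S\<in>W ` homs n A. openin (Dtop n A) S" using op by blast
  moreover have "homs n A \<subseteq> \<Union>(W ` homs n A)" using cov by blast
  ultimately obtain F where F: "finite F" "F \<subseteq> W ` homs n A" "homs n A \<subseteq> \<Union>F"
    unfolding compactin_def by meson
  then obtain G where "G \<subseteq> homs n A" "finite G" "F = W ` G" by (meson finite_subset_image)
  then show ?thesis using F by auto
qed




context
  fixes n j :: nat and c :: "nat \<Rightarrow> bool" and A :: "'a halg" and \<phi>
  assumes n4: "n \<ge> 4" and jr: "j \<in> {1..n-2}" and h: "is_halg A"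
    and phi: "\<phi> \<in> Edual n (sigma_ops n c j) (hcar A) (homs n A) (Dtop n A)"
begin

lemma phi_cont: "continuous_map (Dtop n A) (discrete_topology {..<n}) \<phi>"
  using phi_morph[OF n4 jr h phi] by (simp add: is_morph_def)

lemma stage1:
  assumes x: "x \<in> homs n A"
  shows "\<exists>b\<in>hcar A. x b = \<phi> x \<and> (\<forall>z\<in>homs n A. z b \<le> \<phi> z)"
proof -
  define a where "a = (\<lambda>y. SOME a. a \<in> hcar A \<and> x a = \<phi> x \<and> y a = \<phi> y)"
  have a: "a y \<in> hcar A \<and> x (a y) = \<phi> x \<and> y (a y) = \<phi> y" if y: "y \<in> homs n A" for y
    unfolding a_def by (rule someI_ex) (use binary[OF n4 jr h phi x y] in blast)
  define W where "W = (\<lambda>y. {z \<in> topspace (Dtop n A). z (a y) \<le> \<phi> z})"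
  have op: "openin (Dtop n A) (W y)" if y: "y \<in> homs n A" for y
    unfolding W_def by (rule openin_lc2[OF proj_cont phi_cont]) (use a[OF y] in blast)
  have cov: "y \<in> W y" if y: "y \<in> homs n A" for y
    using a[OF y] y by (simp add: W_def Dtop_topspace)
  obtain G where G: "finite G" "G \<subseteq> homs n A" "homs n A \<subseteq> (\<Union>y\<in>G. W y)"
    using finite_cover[OF h op cov] by blast
  have Gne: "G \<noteq> {}" using G(3) x by auto
  obtain b where b: "b \<in> hcar A" "\<forall>z\<in>homs n A. z b = Min ((\<lambda>y. z (a y)) ` G)"
    using fin_meet[OF h G(1) Gne, of a] a G(2) by blast
  have "(\<lambda>y. x (a y)) ` G = {\<phi> x}"
  proof
    show "(\<lambda>y. x (a y)) ` G \<subseteq> {\<phi> x}" using a G(2) by auto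
    obtain y where "y \<in> G" using Gne by blast
    then have "x (a y) = \<phi> x" using a G(2) by blast
    then have "\<phi> x \<in> (\<lambda>y. x (a y)) ` G" using \<open>y \<in> G\<close> by (metis image_eqI)
    then show "{\<phi> x} \<subseteq> (\<lambda>y. x (a y)) ` G" by simp
  qed
  then have xb: "x b = \<phi> x" using bspec[OF b(2) x] by simp
  have "z b \<le> \<phi> z" if z: "z \<in> homs n A" for z
  proof -
    obtain y0 where y0: "y0 \<in> G" "z \<in> W y0" using G(3) z by blast
    have "z b \<le> z (a y0)" using bspec[OF b(2) z] y0(1) G(1) by simp
    also have "\<dots> \<le> \<phi> z" using y0(2) by (simp add: W_def)
    finally show ?thesis .
  qed
  then show ?thesis using b(1) xb by blast
qed

lemma glue:
  assumes ne: "homs n A \<noteq> {}"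
  shows "\<exists>a\<in>hcar A. \<forall>z\<in>homs n A. z a = \<phi> z"
proof -
  obtain bx where bx: "\<And>x. x \<in> homs n A \<Longrightarrow> bx x \<in> hcar A \<and> x (bx x) = \<phi> x \<and> (\<forall>z\<in>homs n A. z (bx x) \<le> \<phi> z)"
    using stage1 by metis
  define V where "V = (\<lambda>x. {z \<in> topspace (Dtop n A). \<phi> z \<le> z (bx x)})"
  have op: "openin (Dtop n A) (V y)" if y: "y \<in> homs n A" for y
    unfolding V_def by (rule openin_lc2[OF phi_cont proj_cont]) (use bx[OF y] in blast)
  have cov: "y \<in> V y" if y: "y \<in> homs n A" for y
    using bx[OF y] y by (simp add: V_def Dtop_topspace)
  obtain G where G: "finite G" "G \<subseteq> homs n A" "homs n A \<subseteq> (\<Union>y\<in>G. V y)"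
    using finite_cover[OF h op cov] by blast
  have Gne: "G \<noteq> {}" using G(3) ne by auto
  obtain b where b: "b \<in> hcar A" "\<forall>z\<in>homs n A. z b = Max ((\<lambda>y. z (bx y)) ` G)"
    using fin_join[OF h G(1) Gne, of bx] bx G(2) by blast
  have "z b = \<phi> z" if z: "z \<in> homs n A" for z
  proof (rule antisym)
    have "\<forall>y\<in>G. z (bx y) \<le> \<phi> z" using bx z G(2) by blast
    then show "z b \<le> \<phi> z" using bspec[OF b(2) z] G(1) Gne by (simp add: Max_le_iff)
    obtain y0 where y0: "y0 \<in> G" "z \<in> V y0" using G(3) z by blast
    have "\<phi> z \<le> z (bx y0)" using y0(2) by (simp add: V_def)
    also have "\<dots> \<le> z b" using bspec[OF b(2) z] y0(1) G(1) by simp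
    finally show "\<phi> z \<le> z b" .
  qed
  then show ?thesis using b(1) by blast
qed

end

lemma PE_sigma:
  assumes "n \<ge> 4" "j \<in> {1..n-2}" "(d, p) \<in> sigma_ops n c j"
  shows "PE n d p"
  using assms PE_f[OF assms(1)] PE_g[OF assms(1)] PE_h[OF assms(1,2)]
  unfolding sigma_ops_def f_op_def g_op_def by (auto split: if_splits)




theorem theorem3p3:
  fixes n j :: nat and c :: "nat \<Rightarrow> bool" and A :: "'a halg"
    and I :: "'i set" and emb :: "'a \<Rightarrow> 'i \<Rightarrow> nat"
  assumes "n \<ge> 4"
    and "j \<in> {1..n-2}"
    and "is_halg A" and "hhom A (cpow n I) emb" and "inj_on emb (hcar A)"
  shows "hhom A (cpow n (homs n A)) (ev (homs n A)) \<and>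
         bij_betw (ev (homs n A)) (hcar A)
           (Edual n (sigma_ops n c j) (hcar A) (homs n A) (Dtop n A))"
proof -
  note n4 = assms(1) and jr = assms(2) and h = assms(3) and he = assms(4) and ie = assms(5)
  let ?X = "homs n A" and ?A = "hcar A"
  let ?E = "Edual n (sigma_ops n c j) (hcar A) (homs n A) (Dtop n A)"
  note cl = halg_cl[OF h]
  have evx: "\<And>a x. x \<in> ?X \<Longrightarrow> ev ?X a x = x a" by (simp add: ev_def)
  have evX: "ev ?X a \<in> ?X \<rightarrow>\<^sub>E {..<n}" if a: "a \<in> ?A" for a
    using homsD(1)[OF _ a] by (auto simp: ev_def)
  have hom: "hhom A (cpow n ?X) (ev ?X)"
    unfolding hhom_def
  proof (intro conjI ballI)
    fix a assume "a \<in> ?A" then show "ev ?X a \<in> hcar (cpow n ?X)" using evX by (simp add: cpow_def)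
  next
    show "ev ?X (hbot A) = hbot (cpow n ?X)" unfolding cpow_def ev_def
      by (auto intro!: restrict_ext simp: Cn_def dest: homsD(2))
  next
    show "ev ?X (htop A) = htop (cpow n ?X)" unfolding cpow_def ev_def
      by (auto intro!: restrict_ext simp: Cn_def dest: homsD(3))
  next
    fix a b assume a: "a \<in> ?A" and b: "b \<in> ?A"
    have "\<And>x. x \<in> ?X \<Longrightarrow> x (hmeet A a b) = min (x a) (x b)" using homsD(4)[OF _ a b] by blast
    then show "ev ?X (hmeet A a b) = hmeet (cpow n ?X) (ev ?X a) (ev ?X b)"
      unfolding cpow_def ev_def by (auto intro!: restrict_ext simp: Cn_def)
    have "\<And>x. x \<in> ?X \<Longrightarrow> x (hjoin A a b) = max (x a) (x b)" using homsD(5)[OF _ a b] by blast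
    then show "ev ?X (hjoin A a b) = hjoin (cpow n ?X) (ev ?X a) (ev ?X b)"
      unfolding cpow_def ev_def by (auto intro!: restrict_ext simp: Cn_def)
    have hi: "\<And>x. x \<in> ?X \<Longrightarrow> x (himp A a b) = (if x a \<le> x b then n - 1 else x b)" using homsD(6)[OF _ a b] by blast
    then show "ev ?X (himp A a b) = himp (cpow n ?X) (ev ?X a) (ev ?X b)"
    proof -
      have "restrict (\<lambda>x. x (himp A a b)) ?X =
          restrict (\<lambda>i. himp (Cn n) (restrict (\<lambda>x. x a) ?X i) (restrict (\<lambda>x. x b) ?X i)) ?X"
      proof (rule restrict_ext)
        fix x assume x: "x \<in> ?X"
        show "x (himp A a b) = himp (Cn n) (restrict (\<lambda>x. x a) ?X x) (restrict (\<lambda>x. x b) ?X x)"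
          using hi[OF x] x by (simp add: Cn_def)
      qed
      then show ?thesis by (simp add: cpow_def ev_def)
    qed
  qed
  have inE: "ev ?X a \<in> ?E" if a: "a \<in> ?A" for a
  proof -
    have "continuous_map (Dtop n A) (discrete_topology {..<n}) (ev ?X a)"
      by (rule continuous_map_eq[OF proj_cont[OF a]]) (simp add: Dtop_topspace ev_def)
    moreover have "\<forall>(d, p)\<in>sigma_ops n c j. \<forall>x\<in>?X. x ` ?A \<subseteq> d \<longrightarrow>
        ev ?X a x \<in> d \<and> ev ?X a (restrict (p \<circ> x) ?A) = p (ev ?X a x)"
    proof (intro ballI impI, clarify)
      fix d p x assume dp: "(d, p) \<in> sigma_ops n c j" and x: "x \<in> ?X" and xd: "x ` ?A \<subseteq> d"
      have r: "restrict (p \<circ> x) ?A \<in> ?X" by (rule PE_hom[OF x h xd PE_sigma[OF n4 jr dp]])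
      show "ev ?X a x \<in> d \<and> ev ?X a (restrict (p \<circ> x) ?A) = p (ev ?X a x)"
        using xd a x r by (auto simp: ev_def)
    qed
    ultimately show ?thesis using evX[OF a] by (simp add: Edual_def is_morph_def)
  qed
  have inj: "inj_on (ev ?X) ?A"
  proof (rule inj_onI, rule ccontr)
    fix a b assume a: "a \<in> ?A" and b: "b \<in> ?A" and e: "ev ?X a = ev ?X b" and ne: "a \<noteq> b"
    have "emb a \<noteq> emb b" using ie a b ne by (meson inj_onD)
    moreover have ea: "emb a \<in> I \<rightarrow>\<^sub>E {..<n}" "emb b \<in> I \<rightarrow>\<^sub>E {..<n}"
      using he a b by (auto simp: hhom_def cpow_def)
    ultimately obtain i where i: "i \<in> I" "emb a i \<noteq> emb b i"
      by (metis PiE_ext)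
    define x where "x = restrict (\<lambda>a. emb a i) ?A"
    have "x \<in> ?X"
      unfolding homs_def hhom_def
    proof (intro CollectI conjI ballI)
      show "x \<in> ?A \<rightarrow>\<^sub>E {..<n}" using he i(1) by (auto simp: x_def hhom_def cpow_def PiE_iff)
      fix c assume "c \<in> ?A" then show "x c \<in> hcar (Cn n)" using he i(1) by (auto simp: x_def hhom_def cpow_def PiE_iff Cn_def)
    next
      show "x (hbot A) = hbot (Cn n)" using he i(1) cl(1) by (auto simp: x_def hhom_def cpow_def Cn_def)
      show "x (htop A) = htop (Cn n)" using he i(1) cl(2) by (auto simp: x_def hhom_def cpow_def Cn_def)
    next
      fix c d assume c: "c \<in> ?A" and d: "d \<in> ?A"
      have hh: "emb (hmeet A c d) = hmeet (cpow n I) (emb c) (emb d)"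
        "emb (hjoin A c d) = hjoin (cpow n I) (emb c) (emb d)"
        "emb (himp A c d) = himp (cpow n I) (emb c) (emb d)"
        using he c d unfolding hhom_def by auto
      show "x (hmeet A c d) = hmeet (Cn n) (x c) (x d)"
        using hh(1) c d cl(3)[OF c d] i(1) by (simp add: x_def cpow_def)
      show "x (hjoin A c d) = hjoin (Cn n) (x c) (x d)"
        using hh(2) c d cl(4)[OF c d] i(1) by (simp add: x_def cpow_def)
      show "x (himp A c d) = himp (Cn n) (x c) (x d)"
        using hh(3) c d cl(5)[OF c d] i(1) by (simp add: x_def cpow_def)
    qed
    then have "ev ?X a x = ev ?X b x" using e by simp
    then show False using \<open>x \<in> ?X\<close> a b i(2) by (simp add: ev_def x_def)
  qed
  have surj: "?E \<subseteq> ev ?X ` ?A"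
  proof
    fix \<phi> assume phi: "\<phi> \<in> ?E"
    show "\<phi> \<in> ev ?X ` ?A"
    proof (cases "?X = {}")
      case True
      have "\<phi> \<in> {} \<rightarrow>\<^sub>E {..<n}" using phi True by (simp add: Edual_def)
      then have "\<phi> = (\<lambda>_. undefined)" by simp
      moreover have "ev ?X (hbot A) = (\<lambda>_. undefined)" using True by (simp add: ev_def restrict_def)
      ultimately show ?thesis using cl(1) by (metis image_eqI)
    next
      case False
      obtain a where a: "a \<in> ?A" "\<forall>z\<in>?X. z a = \<phi> z" using glue[OF n4 jr h phi False] by blast
      have "\<phi> \<in> ?X \<rightarrow>\<^sub>E {..<n}" using phi by (simp add: Edual_def)
      then have "ev ?X a = \<phi>" using a evX[OF a(1)]
        by (intro PiE_ext[of _ ?X "\<lambda>_. {..<n}"]) (auto simp: ev_def)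
      then show ?thesis using a(1) by (metis image_eqI)
    qed
  qed
  have "ev ?X ` ?A = ?E" using inE surj by auto
  then show ?thesis using hom inj by (simp add: bij_betw_def)
qed


end
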